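(* There is a constant $C>0$ such that for every $\phi\in\mathbb{R}$ and all distinct integers $n_1,n_2$, the arcs $I_{n_1,\phi}$ and $I_{n_2,\phi}$ of $\mathbb{R}/\mathbb{Z}$ satisfy $$d(I_{n_1,\phi},I_{n_2,\phi})>C\min(|I_{n_1,\phi}|,|I_{n_2,\phi}|).$$
   Context: $\tau=\frac{1+\sqrt5}{2}$; $w(x)=\frac1\pi\left(\tan^{-1}(x+1)-\tan^{-1}(x)\right)$. For real $x$, $x\bmod\tau\in\mathbb{R}/\tau\mathbb{Z}$ and $x\bmod1\in\mathbb{R}/\mathbb{Z}$ denote images. For $n\in\mathbb{Z}$ and $\phi\in\mathbb{R}$ let $a_{n,\phi}=\sum w(k-\phi)$, the sum over all integers $k$ with $k\bmod\tau$ in the half-open arc $[0,n\bmod\tau)$ of $\mathbb{R}/\tau\mathbb{Z}$ (from $0$ to $n\bmod\tau$ in the positive direction), and let $I_{n,\phi}\subset\mathbb{R}/\mathbb{Z}$ be the open arc from $a_{n,\phi}\bmod1$ to $(a_{n,\phi}+w(n-\phi))\bmod1$, of length $|I_{n,\phi}|=w(n-\phi)$. Here $d$ denotes the distance between subsets of the circle $\mathbb{R}/\mathbb{Z}$ (infimum of arc-length distances between their points). The constant $C$ is independent of all variables. *)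

theory Defs
  imports "HOL-Analysis.Analysis"
begin

definition gold :: real where "gold = (1 + sqrt 5) / 2"

definition wfun :: "real \<Rightarrow> real" where
  "wfun x = (arctan (x + 1) - arctan x) / pi"

definition rmod :: "real \<Rightarrow> real \<Rightarrow> real" where
  "rmod x y = x - y * of_int \<lfloor>x / y\<rfloor>"

definition arcset :: "int \<Rightarrow> int set" where
  "arcset n = {k::int. rmod (of_int k) gold < rmod (of_int n) gold}"

definition acoef :: "int \<Rightarrow> real \<Rightarrow> real" where
  "acoef n \<phi> = (\<Sum>\<^sub>\<infinity>k\<in>arcset n. wfun (of_int k - \<phi>))"

text \<open>The open arc I_{n,phi}, represented by its set of real lifts (a subset of R,
  understood modulo 1).\<close>
definition Iarc :: "int \<Rightarrow> real \<Rightarrow> real set" where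
  "Iarc n \<phi> = {x. \<exists>m::int. acoef n \<phi> < x + of_int m \<and> x + of_int m < acoef n \<phi> + wfun (of_int n - \<phi>)}"

definition cdist :: "real \<Rightarrow> real \<Rightarrow> real" where
  "cdist x y = Inf {\<bar>x - y - of_int m\<bar> | m::int. True}"

definition csetdist :: "real set \<Rightarrow> real set \<Rightarrow> real" where
  "csetdist A B = Inf {cdist x y | x y. x \<in> A \<and> y \<in> B}"

end

theory Submission imports Defs begin

lemma gold_sq: "gold^2 = gold + 1"
  unfolding gold_def by (simp add: power2_eq_square algebra_simps)

lemma gold_bounds: "1.6 < gold" "gold < 1.7"
proof -
  have a: "2.2 < sqrt 5" by (rule real_less_rsqrt) (simp add: power2_eq_square)
  have b: "sqrt 5 < 2.4" by (rule real_less_lsqrt) (auto simp add: power2_eq_square)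
  show "1.6 < gold" "gold < 1.7" using a b unfolding gold_def by auto
qed

lemma descent: "(x::int)^2 - x*y - y^2 = 0 \<Longrightarrow> x = 0"
proof (induction "nat \<bar>x\<bar>" arbitrary: x y rule: less_induct)
  case less
  show ?case
  proof (rule ccontr)
    assume nz: "x \<noteq> 0"
    have ev: "even x \<and> even y"
    proof (rule ccontr)
      assume "\<not> (even x \<and> even y)"
      then have "odd (x^2 - x*y - y^2)" by (cases "even x"; cases "even y") auto
      with less.prems show False by simp
    qed
    then obtain a b where ab: "x = 2*a" "y = 2*b" by (meson evenE)
    have "4*(a^2 - a*b - b^2) = 0" using less.prems ab by (simp add: power2_eq_square algebra_simps)
    then have "a^2 - a*b - b^2 = 0" by simp
    moreover have "nat \<bar>a\<bar> < nat \<bar>x\<bar>" using nz ab by auto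
    ultimately have "a = 0" using less.hyps by blast
    with ab nz show False by simp
  qed
qed

lemma dioph: fixes d r :: int assumes "d \<noteq> 0"
  shows "\<bar>of_int d - of_int r * gold\<bar> \<ge> 1 / (4 * \<bar>of_int d\<bar>)"
proof -
  define x where "x = of_int d - of_int r * gold"
  define y where "y = of_int d + of_int r * (gold - 1)"
  have "x * y = of_int (d^2 - d*r - r^2)"
  proof -
    have "x * y = of_int d ^2 - of_int d * of_int r - of_int r ^2 - of_int r ^2 * (gold^2 - gold - 1)"
      unfolding x_def y_def power2_eq_square by algebra
    then show ?thesis using gold_sq by simp
  qed
  moreover have "d^2 - d*r - r^2 \<noteq> 0"
  proof
    assume "d^2 - d*r - r^2 = 0"
    then have "d = 0" by (rule descent)
    with assms show False by simp
  qed
  ultimately have xy: "\<bar>x\<bar> * \<bar>y\<bar> \<ge> 1"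
  proof -
    assume e: "x * y = of_int (d^2 - d*r - r^2)" and n: "d^2 - d*r - r^2 \<noteq> 0"
    have "\<bar>d^2 - d*r - r^2\<bar> \<ge> 1" using n by linarith
    then have "\<bar>real_of_int (d^2 - d*r - r^2)\<bar> \<ge> 1" by linarith
    then show ?thesis using e by (simp add: abs_mult[symmetric])
  qed
  have d1: "\<bar>real_of_int d\<bar> \<ge> 1" using assms by linarith
  show ?thesis
  proof (cases "\<bar>x\<bar> \<ge> 1/4")
    case True
    have "1 / (4 * \<bar>of_int d\<bar>) \<le> (1/4::real)" using d1 by (simp add: divide_simps)
    then show ?thesis using True x_def by linarith
  next
    case False
    have g: "gold > 0" using gold_bounds by simp
    have "of_int r * gold = of_int d - x" unfolding x_def by simp
    then have "of_int r = (of_int d - x) / gold" using g by (simp add: field_simps)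
    then have ye: "y = of_int d + (of_int d - x) * ((gold - 1) / gold)" unfolding y_def by simp
    have c0: "0 \<le> (gold - 1)/gold" "(gold - 1)/gold \<le> 1" using gold_bounds by auto
    have "\<bar>(of_int d - x) * ((gold - 1) / gold)\<bar> = \<bar>of_int d - x\<bar> * ((gold - 1) / gold)"
      using c0 gold_bounds by (simp add: abs_mult)
    also have "\<dots> \<le> \<bar>of_int d - x\<bar>" using c0 by (intro mult_left_le) auto
    finally have "\<bar>y\<bar> \<le> \<bar>of_int d\<bar> + \<bar>of_int d - x\<bar>" unfolding ye by linarith
    then have yb: "\<bar>y\<bar> \<le> 4 * \<bar>of_int d\<bar>" using False d1 by linarith
    have "\<bar>x\<bar> * \<bar>y\<bar> \<le> \<bar>x\<bar> * (4 * \<bar>of_int d\<bar>)"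
      using yb by (simp add: mult_left_mono)
    then have "1 \<le> \<bar>x\<bar> * (4 * \<bar>of_int d\<bar>)" using xy by linarith
    then show ?thesis unfolding x_def[symmetric] using d1 by (simp add: divide_simps mult.commute)
  qed
qed


fun fb :: "nat \<Rightarrow> int" where
  "fb 0 = 0" | "fb (Suc 0) = 1" | "fb (Suc (Suc n)) = fb (Suc n) + fb n"

lemma fb_rel: "of_int (fb (Suc m)) - of_int (fb m) * gold = (1 - gold)^m"
proof (induction m rule: fb.induct)
  case 1 then show ?case by simp
next
  case 2 then show ?case by simp
next
  case (3 n)
  have sq: "(1 - gold)^2 = 1 + (1 - gold)" using gold_sq by (simp add: power2_eq_square algebra_simps)
  have "(1 - gold)^(Suc (Suc n)) = (1-gold)^n * (1 - gold)^2" by (simp add: power_add[symmetric])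
  also have "\<dots> = (1-gold)^n * (1 + (1 - gold))" by (subst sq) simp
  also have "\<dots> = (1-gold)^n + (1-gold)^(Suc n)" by (simp add: algebra_simps)
  finally show ?case using 3 by (simp add: algebra_simps)
qed

lemma fb_bound: "0 \<le> fb m \<and> of_int (fb m) \<le> gold^m"
proof (induction m rule: fb.induct)
  case 1 then show ?case by simp
next
  case 2 then show ?case using gold_bounds by simp
next
  case (3 n)
  have "gold^(Suc (Suc n)) = gold^n * gold^2" by (simp add: power_add[symmetric])
  also have "\<dots> = gold^(Suc n) + gold^n" using gold_sq by (simp add: algebra_simps)
  finally show ?case using 3 by simp
qed

lemma approx:
  fixes \<epsilon> :: real assumes e0: "0 < \<epsilon>" and e1: "\<epsilon> \<le> 1"
  shows "\<exists>q r::int. 0 < of_int q - of_int r * gold \<and> of_int q - of_int r * gold < \<epsilon>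
            \<and> \<bar>of_int q\<bar> \<le> 3 / \<epsilon>"
proof -
  define a where "a = gold - 1"
  have a0: "0 < a" "a < 1" using gold_bounds unfolding a_def by auto
  have ag: "a * gold = 1" using gold_sq unfolding a_def by (simp add: power2_eq_square algebra_simps)
  have ex: "\<exists>m. a^m < \<epsilon>" using real_arch_pow_inv[OF e0 a0(2)] .
  define m where "m = (LEAST m. a^m < \<epsilon>)"
  have am: "a^m < \<epsilon>" unfolding m_def by (rule LeastI_ex[OF ex])
  have m1: "m \<noteq> 0" using am e1 by (cases m) auto
  then obtain k where mk: "m = Suc k" by (cases m) auto
  have ak: "\<not> a^k < \<epsilon>" using not_less_Least[of k "\<lambda>m. a^m < \<epsilon>"] mk unfolding m_def by auto
  have "gold^k * a^k = 1" using ag by (simp add: power_mult_distrib[symmetric] mult.commute)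
  then have gk0: "gold^k = 1 / a^k" using a0 by (simp add: field_simps)
  have "1 / a^k \<le> 1/\<epsilon>" using ak e0 a0 by (intro divide_left_mono) (auto simp: not_less)
  then have gk: "gold^k \<le> 1/\<epsilon>" using gk0 by simp
  have "of_int (fb (Suc m)) \<le> gold^(Suc m)" using fb_bound by blast
  also have "\<dots> = gold^2 * gold^k" using mk by (simp add: power2_eq_square)
  also have "\<dots> \<le> gold^2 * (1/\<epsilon>)" using gk gold_bounds by (intro mult_left_mono) auto
  also have "\<dots> \<le> 3 * (1/\<epsilon>)" using gold_sq gold_bounds e0 by (intro mult_right_mono) auto
  finally have qb: "\<bar>of_int (fb (Suc m))\<bar> \<le> 3 / \<epsilon>" using fb_bound[of "Suc m"] by simp
  have s: "of_int (fb (Suc m)) - of_int (fb m) * gold = (-a)^m" using fb_rel unfolding a_def by simp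
  have sa: "\<bar>(-a)^m\<bar> = a^m" using a0 by (simp add: power_abs)
  have sn: "(-a)^m \<noteq> 0" using a0 by simp
  have e1: "(-a)^m < \<epsilon>" using sa am abs_ge_self[of "(-a)^m"] by linarith
  have e2: "- ((-a)^m) < \<epsilon>" using sa am abs_ge_minus_self[of "(-a)^m"] by linarith
  show ?thesis
  proof (cases "(-a)^m > 0")
    case True
    then have "0 < of_int (fb (Suc m)) - of_int (fb m) * gold \<and> of_int (fb (Suc m)) - of_int (fb m) * gold < \<epsilon>
            \<and> \<bar>of_int (fb (Suc m))\<bar> \<le> 3 / \<epsilon>" using s e1 e2 qb True by auto
    then show ?thesis by blast
  next
    case False
    then have neg: "(-a)^m < 0" using sn by linarith
    then have "0 < of_int (- fb (Suc m)) - of_int (- fb m) * gold \<and> of_int (- fb (Suc m)) - of_int (- fb m) * gold < \<epsilon>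
            \<and> \<bar>of_int (- fb (Suc m))\<bar> \<le> 3 / \<epsilon>" 
    proof -
      have "of_int (- fb (Suc m)) - of_int (- fb m) * gold = - ((-a)^m)" using s by simp
      moreover have "\<bar>of_int (- fb (Suc m))\<bar> = \<bar>of_int (fb (Suc m)) :: real\<bar>" by simp
      ultimately show ?thesis using e2 qb neg by linarith
    qed
    then show ?thesis by blast
  qed
qed


definition P :: "int \<Rightarrow> real" where "P k = rmod (of_int k) gold"
definition J :: "int \<Rightarrow> int" where "J k = \<lfloor>of_int k / gold\<rfloor>"

lemma gold_pos: "gold > 0" using gold_bounds by simp

lemma P_eq: "P k = of_int k - gold * of_int (J k)"
  unfolding P_def J_def rmod_def by simp

lemma P_range: "0 \<le> P k" "P k < gold"
proof -
  have g: "gold > 0" by (rule gold_pos)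
  have a: "of_int (J k) \<le> of_int k / gold" "of_int k / gold < of_int (J k) + 1"
    unfolding J_def by linarith+
  from a(1) g have "gold * of_int (J k) \<le> of_int k" by (simp add: field_simps)
  then show "0 \<le> P k" unfolding P_eq by simp
  from a(2) g have "of_int k < gold * of_int (J k) + gold" by (simp add: field_simps)
  then show "P k < gold" unfolding P_eq by simp
qed

lemma mod_unique:
  assumes "0 \<le> x" "x < gold" "0 \<le> y" "y < gold" "x - y = gold * of_int j"
  shows "x = y"
proof -
  have "\<bar>gold * of_int j\<bar> < gold" using assms by linarith
  then have "gold * \<bar>of_int j\<bar> < gold * 1" using gold_pos by (simp add: abs_mult)
  then have "\<bar>of_int j\<bar> < (1::real)" using gold_pos by (simp only: mult_less_cancel_left_pos)
  then have "j = 0" by linarith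
  then show ?thesis using assms by simp
qed

lemma P_inj: assumes "a \<noteq> b" shows "P a \<noteq> P b"
proof
  assume e: "P a = P b"
  have "of_int (a - b) - of_int (J a - J b) * gold = P a - P b" unfolding P_eq by (simp add: algebra_simps)
  also have "\<dots> = 0" using e by simp
  finally have z: "of_int (a - b) - of_int (J a - J b) * gold = 0" .
  have "a - b \<noteq> 0" using assms by simp
  from dioph[OF this, of "J a - J b"] z have "1 / (4 * \<bar>of_int (a - b)\<bar>) \<le> (0::real)" by simp
  moreover have "\<bar>of_int (a - b)\<bar> > (0::real)" using assms by simp
  ultimately show False by (simp add: divide_simps)
qed

lemma gap:
  assumes uv: "P n1 < P n2"
  shows "\<exists>k1 k2. P n1 < P k1 \<and> P k1 < P n2 \<and> (P k2 < P n1 \<or> P n2 < P k2)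
     \<and> \<bar>of_int k1 - of_int n1\<bar> \<le> 12 * \<bar>of_int (n2 - n1) :: real\<bar>
     \<and> \<bar>of_int k2 - of_int n1\<bar> \<le> 12 * \<bar>of_int (n2 - n1) :: real\<bar>"
proof -
  define d where "d = n2 - n1"
  have dnz: "d \<noteq> 0" using uv unfolding d_def by auto
  define \<delta> :: real where "\<delta> = 1 / (4 * \<bar>of_int d\<bar>)"
  have d1: "\<bar>of_int d\<bar> \<ge> (1::real)" using dnz by linarith
  have \<delta>0: "0 < \<delta>" using d1 unfolding \<delta>_def by simp
  have \<delta>1: "\<delta> \<le> 1/4" using d1 unfolding \<delta>_def by (simp add: divide_simps)
  define u where "u = P n1"
  define v where "v = P n2"
  have vu: "v - u = of_int d - of_int (J n2 - J n1) * gold"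
    unfolding u_def v_def P_eq d_def by (simp add: algebra_simps)
  have vu1: "v - u \<ge> \<delta>" using dioph[OF dnz, of "J n2 - J n1"] vu uv unfolding \<delta>_def u_def v_def by linarith
  have "gold - (v - u) = - (of_int d - of_int (J n2 - J n1 + 1) * gold)"
    using vu by (simp add: algebra_simps)
  then have vu2: "gold - (v - u) \<ge> \<delta>" using dioph[OF dnz, of "J n2 - J n1 + 1"]
    P_range[of n1] P_range[of n2] unfolding \<delta>_def u_def v_def by linarith
  obtain q r where qr: "0 < of_int q - of_int r * gold" "of_int q - of_int r * gold < \<delta>"
     "\<bar>of_int q\<bar> \<le> 3 / \<delta>"
    using approx[OF \<delta>0] \<delta>1 by auto
  define s where "s = of_int q - of_int r * gold"
  have qb: "\<bar>of_int q\<bar> \<le> 12 * \<bar>of_int d :: real\<bar>" using qr(3) unfolding \<delta>_def by simp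
  have ur: "0 \<le> u" "u < gold" "0 \<le> v" "v < gold" using P_range unfolding u_def v_def by auto
  have k1: "P (n1 + q) = u + s"
  proof (rule mod_unique)
    show "P (n1 + q) - (u + s) = gold * of_int (J n1 + r - J (n1 + q))"
      unfolding u_def s_def P_eq by (simp add: algebra_simps)
  qed (use P_range[of "n1+q"] ur qr vu1 vu2 s_def in auto)
  have k2: "P (n1 - q) < u \<or> v < P (n1 - q)"
  proof (cases "u - s \<ge> 0")
    case True
    have "P (n1 - q) = u - s"
    proof (rule mod_unique)
      show "P (n1 - q) - (u - s) = gold * of_int (J n1 - r - J (n1 - q))"
        unfolding u_def s_def P_eq by (simp add: algebra_simps)
    qed (use P_range[of "n1-q"] ur qr True s_def in auto)
    then show ?thesis using qr s_def by auto
  next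
    case False
    have "P (n1 - q) = u - s + gold"
    proof (rule mod_unique)
      show "P (n1 - q) - (u - s + gold) = gold * of_int (J n1 - r - J (n1 - q) - 1)"
        unfolding u_def s_def P_eq by (simp add: algebra_simps)
    qed (use P_range[of "n1-q"] ur qr False s_def \<delta>1 gold_bounds in auto)
    then show ?thesis using qr s_def vu2 by auto
  qed
  have "P n1 < P (n1 + q) \<and> P (n1 + q) < P n2 \<and> (P (n1 - q) < P n1 \<or> P n2 < P (n1 - q))
     \<and> \<bar>of_int (n1 + q) - of_int n1\<bar> \<le> 12 * \<bar>of_int (n2 - n1) :: real\<bar>
     \<and> \<bar>of_int (n1 - q) - of_int n1\<bar> \<le> 12 * \<bar>of_int (n2 - n1) :: real\<bar>"
    using k1 k2 qb qr vu1 vu2 s_def \<delta>1 unfolding u_def v_def d_def by auto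
  then show ?thesis by blast
qed


lemma w_mvt: "\<exists>\<xi>. x < \<xi> \<and> \<xi> < x + 1 \<and> wfun x = 1 / (pi * (1 + \<xi>^2))"
proof -
  have "\<exists>z. x < z \<and> z < x + 1 \<and> arctan (x+1) - arctan x = ((x+1) - x) * inverse (1 + z^2)"
    by (rule MVT2) (auto intro: DERIV_arctan)
  then obtain z where z: "x < z" "z < x + 1" "arctan (x+1) - arctan x = inverse (1 + z^2)" by auto
  have "wfun x = 1 / (pi * (1 + z^2))" unfolding wfun_def z(3) by (simp add: divide_simps)
  with z show ?thesis by blast
qed

lemma w_pos: "wfun x > 0"
proof -
  obtain z where "wfun x = 1 / (pi * (1 + z^2))" using w_mvt by blast
  moreover have "pi * (1 + z^2) > 0" by (simp add: add_pos_nonneg)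
  ultimately show ?thesis by simp
qed

lemma w_upper: "wfun x \<le> 3 / (pi * (1 + x^2))"
proof -
  obtain z where z: "x < z" "z < x + 1" "wfun x = 1 / (pi * (1 + z^2))" using w_mvt by blast
  define t where "t = x - z"
  have "\<bar>t\<bar> \<le> 1" using z unfolding t_def by linarith
  then have t: "t^2 \<le> 1" "0 \<le> (z - t)^2" by (auto simp: abs_square_le_1)
  have "1 + x^2 \<le> 3 * (1 + z^2)"
  proof -
    have "x = z + t" unfolding t_def by simp
    then have "3 * (1 + z^2) - (1 + x^2) = 2 + 2*z^2 - 2*z*t - t^2" by (simp add: power2_eq_square algebra_simps)
    also have "\<dots> = 2*(1 - t^2) + z^2 + (z - t)^2" by (simp add: power2_eq_square algebra_simps)
    finally show ?thesis using t by (smt (verit) zero_le_power2)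
  qed
  then have "pi * (1 + x^2) \<le> pi * (3 * (1 + z^2))" using pi_gt_zero by (intro mult_left_mono) auto
  then have "pi * (1 + x^2) \<le> 3 * (pi * (1 + z^2))" by (simp add: algebra_simps)
  then have "1 / (pi * (1 + z^2)) \<le> 3 / (pi * (1 + x^2))"
    by (simp add: divide_simps add_pos_nonneg mult.commute mult.left_commute)
  then show ?thesis using z by simp
qed

lemma w_lower: "wfun x \<ge> 1 / (3 * pi * (1 + x^2))"
proof -
  obtain z where z: "x < z" "z < x + 1" "wfun x = 1 / (pi * (1 + z^2))" using w_mvt by blast
  define t where "t = z - x"
  have "\<bar>t\<bar> \<le> 1" using z unfolding t_def by linarith
  then have t: "t^2 \<le> 1" "0 \<le> (x + t)^2" "0 \<le> (x - t)^2" by (auto simp: abs_square_le_1)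
  have "1 + z^2 \<le> 3 * (1 + x^2)"
  proof -
    have "z = x + t" unfolding t_def by simp
    then have "3 * (1 + x^2) - (1 + z^2) = 2 + 2*x^2 - 2*x*t - t^2" by (simp add: power2_eq_square algebra_simps)
    also have "\<dots> = 2*(1 - t^2) + x^2 + (x - t)^2" by (simp add: power2_eq_square algebra_simps)
    finally show ?thesis using t by (smt (verit) zero_le_power2)
  qed
  then have "pi * (1 + z^2) \<le> pi * (3 * (1 + x^2))" using pi_gt_zero by (intro mult_left_mono) auto
  then have "pi * (1 + z^2) \<le> 3 * pi * (1 + x^2)" by (simp add: algebra_simps)
  then have "1 / (3 * pi * (1 + x^2)) \<le> 1 / (pi * (1 + z^2))"
    by (intro divide_left_mono) (auto simp: add_pos_nonneg)
  then show ?thesis using z by simp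
qed

lemma w_tele: "(\<Sum>k\<in>{- int N..int N}. wfun (of_int k - \<phi>)) =
   (arctan (of_int N + 1 - \<phi>) - arctan (- of_int N - \<phi>)) / pi"
proof (induction N)
  case 0 then show ?case by (simp add: wfun_def)
next
  case (Suc N)
  have e: "{- int (Suc N)..int (Suc N)} = insert (- int (Suc N)) (insert (int (Suc N)) {- int N..int N})" by auto
  show ?case unfolding e using Suc by (simp add: wfun_def algebra_simps diff_divide_distrib add_divide_distrib)
qed

lemma fin_bound: "finite (F::int set) \<Longrightarrow> \<exists>N. F \<subseteq> {- int N..int N}"
proof (induction F rule: finite_induct)
  case empty then show ?case by simp
next
  case (insert x F)
  then obtain N where N: "F \<subseteq> {- int N..int N}" by auto
  have "insert x F \<subseteq> {- int (max N (nat \<bar>x\<bar>))..int (max N (nat \<bar>x\<bar>))}"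
  proof
    fix y assume "y \<in> insert x F"
    then have "y = x \<or> (- int N \<le> y \<and> y \<le> int N)" using N by auto
    then show "y \<in> {- int (max N (nat \<bar>x\<bar>))..int (max N (nat \<bar>x\<bar>))}" by (auto simp: max_def)
  qed
  then show ?case by blast
qed

lemma fin_sum_le1: "finite F \<Longrightarrow> (\<Sum>k\<in>F. wfun (of_int k - \<phi>)) \<le> 1"
proof -
  assume "finite F"
  then obtain N where N: "F \<subseteq> {- int N..int N}" using fin_bound by blast
  have "(\<Sum>k\<in>F. wfun (of_int k - \<phi>)) \<le> (\<Sum>k\<in>{- int N..int N}. wfun (of_int k - \<phi>))"
    using N w_pos by (intro sum_mono2) (auto intro: less_imp_le)
  also have "\<dots> \<le> 1" unfolding w_tele using arctan_bounded[of "of_int N + 1 - \<phi>"] arctan_bounded[of "- of_int N - \<phi>"]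
    by (simp add: divide_simps)
  finally show ?thesis .
qed

lemma w_summable: "(\<lambda>k. wfun (of_int k - \<phi>)) summable_on A"
proof -
  have "(\<lambda>k. wfun (of_int k - \<phi>)) summable_on UNIV"
  proof (rule nonneg_bdd_above_summable_on)
    show "bdd_above (sum (\<lambda>k. wfun (of_int k - \<phi>)) ` {F. F \<subseteq> UNIV \<and> finite F})"
      using fin_sum_le1 by (intro bdd_aboveI[of _ 1]) auto
  qed (auto intro: less_imp_le w_pos)
  then show ?thesis by (rule summable_on_subset_banach) simp
qed

lemma w_total: "(\<Sum>\<^sub>\<infinity>k\<in>A. wfun (of_int k - \<phi>)) \<le> 1"
  by (rule infsum_le_finite_sums[OF w_summable]) (rule fin_sum_le1)

lemma w_nonneg_sum: "(\<Sum>\<^sub>\<infinity>k\<in>A. wfun (of_int k - \<phi>)) \<ge> 0"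
  by (rule infsum_nonneg) (auto intro: less_imp_le w_pos)

lemma w_single: "k \<in> A \<Longrightarrow> (\<Sum>\<^sub>\<infinity>k\<in>A. wfun (of_int k - \<phi>)) \<ge> wfun (of_int k - \<phi>)"
proof -
  assume k: "k \<in> A"
  have "(\<Sum>\<^sub>\<infinity>j\<in>{k}. wfun (of_int j - \<phi>)) \<le> (\<Sum>\<^sub>\<infinity>j\<in>A. wfun (of_int j - \<phi>))"
    using k by (intro infsum_mono2 w_summable) (auto intro: less_imp_le w_pos)
  then show ?thesis by simp
qed


abbreviation W :: "real \<Rightarrow> int set \<Rightarrow> real" where
  "W \<phi> A \<equiv> (\<Sum>\<^sub>\<infinity>k\<in>A. wfun (of_int k - \<phi>))"

lemma arcset_P: "arcset n = {k. P k < P n}"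
  unfolding arcset_def P_def by simp

lemma W_Un: "A \<inter> B = {} \<Longrightarrow> W \<phi> (A \<union> B) = W \<phi> A + W \<phi> B"
  by (rule infsum_Un_disjoint) (auto intro: w_summable)

lemma W_ins: "n \<notin> B \<Longrightarrow> W \<phi> (insert n B) = wfun (of_int n - \<phi>) + W \<phi> B"
  using W_Un[of "{n}" B \<phi>] by simp

lemma decomp1:
  assumes uv: "P n1 < P n2"
  shows "acoef n2 \<phi> = acoef n1 \<phi> + wfun (of_int n1 - \<phi>) + W \<phi> {k. P n1 < P k \<and> P k < P n2}"
proof -
  have e: "arcset n2 = arcset n1 \<union> insert n1 {k. P n1 < P k \<and> P k < P n2}"
  proof -
    have "P k < P n2 \<longleftrightarrow> P k < P n1 \<or> k = n1 \<or> (P n1 < P k \<and> P k < P n2)" for k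
      using P_inj[of k n1] uv by (cases "k = n1") auto
    then show ?thesis unfolding arcset_P by auto
  qed
  have "acoef n2 \<phi> = W \<phi> (arcset n1) + W \<phi> (insert n1 {k. P n1 < P k \<and> P k < P n2})"
    unfolding acoef_def e by (rule W_Un) (auto simp: arcset_P)
  also have "\<dots> = acoef n1 \<phi> + wfun (of_int n1 - \<phi>) + W \<phi> {k. P n1 < P k \<and> P k < P n2}"
    unfolding acoef_def by (subst W_ins) auto
  finally show ?thesis .
qed

lemma decomp2:
  shows "acoef n2 \<phi> + wfun (of_int n2 - \<phi>) + W \<phi> {k. P n2 < P k} \<le> 1"
proof -
  have e: "UNIV = arcset n2 \<union> insert n2 {k. P n2 < P k}"
  proof -
    have "P k < P n2 \<or> k = n2 \<or> P n2 < P k" for k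
      using P_inj[of k n2] by (cases "k = n2") auto
    then show ?thesis unfolding arcset_P by auto
  qed
  have "W \<phi> UNIV = W \<phi> (arcset n2) + W \<phi> (insert n2 {k. P n2 < P k})"
    by (subst e, rule W_Un) (auto simp: arcset_P)
  also have "\<dots> = acoef n2 \<phi> + wfun (of_int n2 - \<phi>) + W \<phi> {k. P n2 < P k}"
    unfolding acoef_def by (subst W_ins) auto
  finally show ?thesis using w_total[of \<phi> UNIV] by simp
qed

lemma cdist_sym: "cdist x y = cdist y x"
proof -
  have "{\<bar>x - y - of_int m\<bar> | m::int. True} = {\<bar>y - x - of_int m\<bar> | m::int. True}"
  proof (intro set_eqI iffI)
    fix z assume "z \<in> {\<bar>x - y - of_int m\<bar> | m::int. True}"
    then obtain m where "z = \<bar>x - y - of_int m\<bar>" by auto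
    then have "z = \<bar>y - x - of_int (- m)\<bar>" by simp
    then show "z \<in> {\<bar>y - x - of_int m\<bar> | m::int. True}" by blast
  next
    fix z assume "z \<in> {\<bar>y - x - of_int m\<bar> | m::int. True}"
    then obtain m where "z = \<bar>y - x - of_int m\<bar>" by auto
    then have "z = \<bar>x - y - of_int (- m)\<bar>" by simp
    then show "z \<in> {\<bar>x - y - of_int m\<bar> | m::int. True}" by blast
  qed
  then show ?thesis unfolding cdist_def by simp
qed

lemma csetdist_sym: "csetdist A B = csetdist B A"
proof -
  have "{cdist x y | x y. x \<in> A \<and> y \<in> B} = {cdist x y | x y. x \<in> B \<and> y \<in> A}"
    using cdist_sym by blast
  then show ?thesis unfolding csetdist_def by simp
qed

lemma dist_lower:
  assumes uv: "P n1 < P n2"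
  shows "csetdist (Iarc n1 \<phi>) (Iarc n2 \<phi>) \<ge>
     min (W \<phi> {k. P n1 < P k \<and> P k < P n2}) (acoef n1 \<phi> + W \<phi> {k. P n2 < P k})"
proof -
  define g where "g = min (W \<phi> {k. P n1 < P k \<and> P k < P n2}) (acoef n1 \<phi> + W \<phi> {k. P n2 < P k})"
  define a1 where "a1 = acoef n1 \<phi>"
  define a2 where "a2 = acoef n2 \<phi>"
  define w1 where "w1 = wfun (of_int n1 - \<phi>)"
  define w2 where "w2 = wfun (of_int n2 - \<phi>)"
  have D1: "a2 = a1 + w1 + W \<phi> {k. P n1 < P k \<and> P k < P n2}"
    using decomp1[OF uv] unfolding a1_def a2_def w1_def by simp
  have D2: "a2 + w2 + W \<phi> {k. P n2 < P k} \<le> 1" using decomp2 unfolding a2_def w2_def by simp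
  have cd: "cdist x y \<ge> g" if x: "x \<in> Iarc n1 \<phi>" and y: "y \<in> Iarc n2 \<phi>" for x y
  proof -
    obtain m1 :: int where m1: "a1 < x + of_int m1" "x + of_int m1 < a1 + w1"
      using x unfolding Iarc_def a1_def w1_def by auto
    obtain m2 :: int where m2: "a2 < y + of_int m2" "y + of_int m2 < a2 + w2"
      using y unfolding Iarc_def a2_def w2_def by auto
    have g1: "g \<le> W \<phi> {k. P n1 < P k \<and> P k < P n2}" "g \<le> a1 + W \<phi> {k. P n2 < P k}"
      unfolding g_def a1_def by auto
    have "g \<le> \<bar>x - y - of_int m\<bar>" for m :: int
    proof (cases "m + m1 - m2 \<ge> 0")
      case True
      then have "real_of_int (m + m1 - m2) \<ge> 0" by linarith
      then show ?thesis using m1 m2 D1 g1 abs_ge_minus_self[of "x - y - of_int m"] by linarith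
    next
      case False
      then have "real_of_int (m + m1 - m2) \<le> -1" by linarith
      then show ?thesis using m1 m2 D1 D2 g1 abs_ge_self[of "x - y - of_int m"] by linarith
    qed
    then show ?thesis unfolding cdist_def by (intro cInf_greatest) auto
  qed
  have w1p: "w1 > 0" "w2 > 0" unfolding w1_def w2_def by (auto intro: w_pos)
  have "a1 + w1/2 \<in> Iarc n1 \<phi>" unfolding Iarc_def a1_def[symmetric] w1_def[symmetric]
    using w1p by (intro CollectI exI[of _ 0]) auto
  moreover have "a2 + w2/2 \<in> Iarc n2 \<phi>" unfolding Iarc_def a2_def[symmetric] w2_def[symmetric]
    using w1p by (intro CollectI exI[of _ 0]) auto
  ultimately have ne: "{cdist x y | x y. x \<in> Iarc n1 \<phi> \<and> y \<in> Iarc n2 \<phi>} \<noteq> {}" by blast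
  have "g \<le> csetdist (Iarc n1 \<phi>) (Iarc n2 \<phi>)"
    unfolding csetdist_def using ne cd by (intro cInf_greatest) auto
  then show ?thesis unfolding g_def .
qed


lemma w_compare:
  assumes "\<bar>x\<bar> \<le> 25 * \<bar>y\<bar>"
  shows "wfun x \<ge> wfun y / 5625"
proof -
  have "\<bar>x\<bar>^2 \<le> (25 * \<bar>y\<bar>)^2" using assms by (intro power_mono) auto
  then have x2: "x^2 \<le> 625 * y^2" by (simp add: power_mult_distrib)
  have p: "pi * (1 + y^2) > 0" by (simp add: add_pos_nonneg)
  have "wfun y / 5625 \<le> (3 / (pi * (1 + y^2))) / 5625" using w_upper[of y] by simp
  also have "\<dots> = 1 / (3 * pi * (625 * (1 + y^2)))" by (simp add: divide_simps)
  also have "\<dots> \<le> 1 / (3 * pi * (1 + x^2))"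
  proof (rule divide_left_mono)
    show "3 * pi * (1 + x^2) \<le> 3 * pi * (625 * (1 + y^2))" using x2 by (intro mult_left_mono) auto
    show "0 < 3 * pi * (625 * (1 + y^2)) * (3 * pi * (1 + x^2))" by (simp add: add_pos_nonneg)
  qed simp
  also have "\<dots> \<le> wfun x" by (rule w_lower)
  finally show ?thesis .
qed

lemma w_compare2:
  assumes "\<bar>x\<bar> \<le> 25 * max \<bar>y1\<bar> \<bar>y2\<bar>"
  shows "wfun x \<ge> min (wfun y1) (wfun y2) / 5625"
proof (cases "\<bar>y1\<bar> \<le> \<bar>y2\<bar>")
  case True
  then have "wfun x \<ge> wfun y2 / 5625" using assms by (intro w_compare) (simp add: max_def)
  then show ?thesis by (smt (verit) divide_right_mono min.cobounded2)
next
  case False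
  then have "wfun x \<ge> wfun y1 / 5625" using assms by (intro w_compare) (simp add: max_def)
  then show ?thesis by (smt (verit) divide_right_mono min.cobounded1)
qed

lemma main_ordered:
  assumes uv: "P n1 < P n2"
  shows "csetdist (Iarc n1 \<phi>) (Iarc n2 \<phi>) > (1/10000) * min (wfun (of_int n1 - \<phi>)) (wfun (of_int n2 - \<phi>))"
proof -
  obtain k1 k2 where k: "P n1 < P k1" "P k1 < P n2" "P k2 < P n1 \<or> P n2 < P k2"
     "\<bar>of_int k1 - of_int n1\<bar> \<le> 12 * \<bar>of_int (n2 - n1) :: real\<bar>"
     "\<bar>of_int k2 - of_int n1\<bar> \<le> 12 * \<bar>of_int (n2 - n1) :: real\<bar>"
    using gap[OF uv] by blast
  define mn where "mn = min (wfun (of_int n1 - \<phi>)) (wfun (of_int n2 - \<phi>))"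
  have mnp: "mn > 0" unfolding mn_def using w_pos by simp
  have bnd: "wfun (of_int k - \<phi>) \<ge> mn / 5625"
    if "\<bar>of_int k - of_int n1\<bar> \<le> 12 * \<bar>of_int (n2 - n1) :: real\<bar>" for k
    unfolding mn_def
  proof (rule w_compare2)
    have "\<bar>of_int (n2 - n1) :: real\<bar> \<le> \<bar>of_int n1 - \<phi>\<bar> + \<bar>of_int n2 - \<phi>\<bar>" by simp
    then show "\<bar>of_int k - \<phi>\<bar> \<le> 25 * max \<bar>of_int n1 - \<phi>\<bar> \<bar>of_int n2 - \<phi>\<bar>"
    proof -
      have t: "\<bar>of_int k - \<phi>\<bar> \<le> \<bar>of_int k - of_int n1\<bar> + \<bar>of_int n1 - \<phi>\<bar>"
        using abs_triangle_ineq[of "of_int k - of_int n1" "of_int n1 - \<phi>"] by simp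
      show ?thesis
        using that t \<open>\<bar>of_int (n2 - n1) :: real\<bar> \<le> _\<close>
        by (cases "\<bar>of_int n1 - \<phi>\<bar> \<le> \<bar>of_int n2 - \<phi>\<bar>"; simp add: max_def; linarith)
    qed
  qed
  have g1: "W \<phi> {k. P n1 < P k \<and> P k < P n2} \<ge> mn / 5625"
    using w_single[of k1 "{k. P n1 < P k \<and> P k < P n2}" \<phi>] k(1,2) bnd[OF k(4)] by auto
  have g2: "acoef n1 \<phi> + W \<phi> {k. P n2 < P k} \<ge> mn / 5625"
  proof (cases "P k2 < P n1")
    case True
    then have "acoef n1 \<phi> \<ge> wfun (of_int k2 - \<phi>)" unfolding acoef_def arcset_P by (intro w_single) auto
    then show ?thesis using bnd[OF k(5)] w_nonneg_sum[of \<phi> "{k. P n2 < P k}"] by linarith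
  next
    case False
    then have "W \<phi> {k. P n2 < P k} \<ge> wfun (of_int k2 - \<phi>)" using k(3) by (intro w_single) auto
    then show ?thesis using bnd[OF k(5)] w_nonneg_sum[of \<phi> "arcset n1"] unfolding acoef_def by linarith
  qed
  have "csetdist (Iarc n1 \<phi>) (Iarc n2 \<phi>) \<ge> mn / 5625"
    using dist_lower[OF uv, of \<phi>] g1 g2 by linarith
  moreover have "mn / 5625 > (1/10000) * mn" using mnp by simp
  ultimately show ?thesis unfolding mn_def by linarith
qed

theorem corollary16:
  shows "\<exists>C>0. \<forall>(\<phi>::real) (n1::int) (n2::int). n1 \<noteq> n2 \<longrightarrow>
     csetdist (Iarc n1 \<phi>) (Iarc n2 \<phi>) > C * min (wfun (of_int n1 - \<phi>)) (wfun (of_int n2 - \<phi>))"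
proof (intro exI[of _ "1/10000"] conjI allI impI)
  fix \<phi> :: real and n1 n2 :: int
  assume ne: "n1 \<noteq> n2"
  show "csetdist (Iarc n1 \<phi>) (Iarc n2 \<phi>) > (1/10000) * min (wfun (of_int n1 - \<phi>)) (wfun (of_int n2 - \<phi>))"
  proof (cases "P n1 < P n2")
    case True
    then show ?thesis by (rule main_ordered)
  next
    case False
    then have "P n2 < P n1" using P_inj[OF ne] by linarith
    from main_ordered[OF this, of \<phi>] show ?thesis by (simp add: csetdist_sym min.commute)
  qed
qed simp

end
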